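(* Let $G$ be a second countable locally compact Hausdorff groupoid with a fixed left Haar system $\lambda=\{\lambda^u\}_{u\in G^0}$, and let $(\Phi,\Psi)$ be a complementary pair of $N$-functions with $\Phi\in\Delta_2$. For $f\in C_c(G)$, the function $g:G^0\to\mathbb R$, $g(u)=\|f^u\|^0_\Phi$, where $f^u=f|_{G^u}$, is continuous on $G^0$ with compact support.
   Context: $G^0$ is the unit space, $r(x)=xx^{-1}$, $G^u=r^{-1}(u)$. The left Haar system consists of positive Radon measures $\lambda^u$ with support $G^u$ such that $u\mapsto\int f\,d\lambda^u$ is continuous for every $f\in C_c(G)$ and $\int f(xy)d\lambda^{d(x)}(y)=\int f(y)d\lambda^{r(x)}(y)$, where $d(x)=x^{-1}x$. An $N$-function is a continuous even convex $\Phi:\mathbb R\to[0,\infty)$ with $\Phi(x)=0$ iff $x=0$, $\Phi(x)/x\to0$ as $x\to0$, $\Phi(x)/x\to\infty$ as $x\to\infty$; complementary function $\Psi(y)=\sup_{x\ge0}(x|y|-\Phi(x))$. $\Phi\in\Delta_2$: there is $k>0$ with $\Phi(2x)\le k\Phi(x)$ for all $x\ge0$ ($G$ non-compact), resp. for all $x\ge x_0$ for some $x_0>0$ ($G$ compact). For a measurable $h$ on $G^u$, the gauge norm is $\|h\|^0_\Phi=\inf\{k>0:\int_{G^u}\Phi(|h|/k)d\lambda^u\le1\}$. *)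

theory Defs
  imports "HOL-Analysis.Analysis"
begin

text \<open>Groupoid structure on the whole carrier type 'g (Renault's axioms):
  G2 is the set of composable pairs, gmul the product, ginv the inverse.\<close>
definition groupoid :: "('g \<times> 'g) set \<Rightarrow> ('g \<Rightarrow> 'g \<Rightarrow> 'g) \<Rightarrow> ('g \<Rightarrow> 'g) \<Rightarrow> bool" where
  "groupoid G2 gmul ginv \<longleftrightarrow>
     (\<forall>x y z. (x, y) \<in> G2 \<and> (y, z) \<in> G2 \<longrightarrow>
         (gmul x y, z) \<in> G2 \<and> (x, gmul y z) \<in> G2 \<and> gmul (gmul x y) z = gmul x (gmul y z)) \<and>
     (\<forall>x. ginv (ginv x) = x) \<and>
     (\<forall>x. (ginv x, x) \<in> G2) \<and>
     (\<forall>x y. (x, y) \<in> G2 \<longrightarrow> gmul (ginv x) (gmul x y) = y \<and> gmul (gmul x y) (ginv y) = x)"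

definition range_map :: "('g \<Rightarrow> 'g \<Rightarrow> 'g) \<Rightarrow> ('g \<Rightarrow> 'g) \<Rightarrow> 'g \<Rightarrow> 'g" where
  "range_map gmul ginv x = gmul x (ginv x)"

definition source_map :: "('g \<Rightarrow> 'g \<Rightarrow> 'g) \<Rightarrow> ('g \<Rightarrow> 'g) \<Rightarrow> 'g \<Rightarrow> 'g" where
  "source_map gmul ginv x = gmul (ginv x) x"

definition unit_space :: "('g \<Rightarrow> 'g \<Rightarrow> 'g) \<Rightarrow> ('g \<Rightarrow> 'g) \<Rightarrow> 'g set" where
  "unit_space gmul ginv = range (range_map gmul ginv)"

definition topological_groupoid ::
  "('g::topological_space \<times> 'g) set \<Rightarrow> ('g \<Rightarrow> 'g \<Rightarrow> 'g) \<Rightarrow> ('g \<Rightarrow> 'g) \<Rightarrow> bool" where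
  "topological_groupoid G2 gmul ginv \<longleftrightarrow> groupoid G2 gmul ginv \<and>
     continuous_on G2 (\<lambda>(x, y). gmul x y) \<and> continuous_on UNIV ginv"

definition Cc :: "('g::topological_space \<Rightarrow> real) set" where
  "Cc = {f. continuous_on UNIV f \<and> compact (closure {x. f x \<noteq> 0})}"

definition measure_support :: "'g::topological_space measure \<Rightarrow> 'g set" where
  "measure_support M = {x. \<forall>U. open U \<and> x \<in> U \<longrightarrow> emeasure M U > 0}"

definition radon_measure :: "'g::topological_space measure \<Rightarrow> bool" where
  "radon_measure M \<longleftrightarrow> sets M = sets borel \<and>
     (\<forall>K. compact K \<longrightarrow> emeasure M K < \<infinity>) \<and>
     (\<forall>A \<in> sets borel. emeasure M A = (INF U \<in> {U. open U \<and> A \<subseteq> U}. emeasure M U)) \<and>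
     (\<forall>U. open U \<longrightarrow> emeasure M U = (SUP K \<in> {K. compact K \<and> K \<subseteq> U}. emeasure M K))"

definition left_haar_system ::
  "('g::topological_space \<Rightarrow> 'g \<Rightarrow> 'g) \<Rightarrow> ('g \<Rightarrow> 'g) \<Rightarrow> ('g \<Rightarrow> 'g measure) \<Rightarrow> bool" where
  "left_haar_system gmul ginv lam \<longleftrightarrow>
     (\<forall>u \<in> unit_space gmul ginv. radon_measure (lam u) \<and>
         measure_support (lam u) = {x. range_map gmul ginv x = u}) \<and>
     (\<forall>f \<in> Cc. continuous_on (unit_space gmul ginv) (\<lambda>u. integral\<^sup>L (lam u) f)) \<and>
     (\<forall>f \<in> Cc. \<forall>x.
        (\<integral>y. f (gmul x y) \<partial>lam (source_map gmul ginv x)) = (\<integral>y. f y \<partial>lam (range_map gmul ginv x)))"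

definition N_function :: "(real \<Rightarrow> real) \<Rightarrow> bool" where
  "N_function \<Phi> \<longleftrightarrow> continuous_on UNIV \<Phi> \<and> (\<forall>x. \<Phi> (- x) = \<Phi> x) \<and> convex_on UNIV \<Phi> \<and>
     (\<forall>x. \<Phi> x \<ge> 0) \<and> (\<forall>x. \<Phi> x = 0 \<longleftrightarrow> x = 0) \<and>
     ((\<lambda>x. \<Phi> x / x) \<longlongrightarrow> 0) (at 0) \<and>
     filterlim (\<lambda>x. \<Phi> x / x) at_top at_top"

definition complementary_function :: "(real \<Rightarrow> real) \<Rightarrow> real \<Rightarrow> real" where
  "complementary_function \<Phi> y = (SUP x \<in> {0..}. x * \<bar>y\<bar> - \<Phi> x)"

definition complementary_pair :: "(real \<Rightarrow> real) \<Rightarrow> (real \<Rightarrow> real) \<Rightarrow> bool" where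
  "complementary_pair \<Phi> \<Psi> \<longleftrightarrow> N_function \<Phi> \<and> N_function \<Psi> \<and> \<Psi> = complementary_function \<Phi>"

definition Delta2 :: "'g::topological_space itself \<Rightarrow> (real \<Rightarrow> real) \<Rightarrow> bool" where
  "Delta2 _ \<Phi> \<longleftrightarrow>
     (if compact (UNIV :: 'g set)
      then (\<exists>k>0. \<exists>x0>0. \<forall>x\<ge>x0. \<Phi> (2 * x) \<le> k * \<Phi> x)
      else (\<exists>k>0. \<forall>x\<ge>0. \<Phi> (2 * x) \<le> k * \<Phi> x))"

definition gauge_norm :: "(real \<Rightarrow> real) \<Rightarrow> 'g measure \<Rightarrow> 'g set \<Rightarrow> ('g \<Rightarrow> real) \<Rightarrow> real" where
  "gauge_norm \<Phi> M A h = Inf {k. k > 0 \<and> (\<integral>\<^sup>+ y \<in> A. ennreal (\<Phi> (\<bar>h y\<bar> / k)) \<partial>M) \<le> 1}"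

end

theory Submission
  imports Defs
begin


lemma phi_scale:
  assumes "N_function \<Phi>" "0 \<le> c" "c \<le> 1"
  shows "\<Phi> (c * t) \<le> c * \<Phi> t"
proof -
  have cv: "convex_on UNIV \<Phi>" and z: "\<Phi> 0 = 0" using assms(1) unfolding N_function_def by auto
  have "\<Phi> ((1 - c) *\<^sub>R 0 + c *\<^sub>R t) \<le> (1 - c) * \<Phi> 0 + c * \<Phi> t"
    by (rule convex_onD[OF cv assms(2,3)]) auto
  then show ?thesis using z by simp
qed

lemma null_outside:
  fixes M :: "'g::topological_space measure"
  assumes "radon_measure M" "measure_support M = A" "closed A"
  shows "emeasure M (- A) = 0"
proof -
  have sets: "sets M = sets borel" using assms(1) unfolding radon_measure_def by auto
  have inner: "emeasure M (- A) = (SUP K \<in> {K. compact K \<and> K \<subseteq> - A}. emeasure M K)"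
    using assms(1) assms(3) unfolding radon_measure_def by auto
  have "emeasure M K = 0" if K: "compact K" "K \<subseteq> - A" for K
  proof -
    have "\<forall>x\<in>K. \<exists>U. open U \<and> x \<in> U \<and> emeasure M U = 0"
    proof
      fix x assume "x \<in> K"
      then have "x \<notin> measure_support M" using K assms(2) by auto
      then show "\<exists>U. open U \<and> x \<in> U \<and> emeasure M U = 0"
        unfolding measure_support_def by (auto simp: not_less)
    qed
    then obtain U where U: "\<And>x. x \<in> K \<Longrightarrow> open (U x) \<and> x \<in> U x \<and> emeasure M (U x) = 0"
      by metis
    have "K \<subseteq> \<Union> (U ` K)" using U by auto
    then obtain F where F: "F \<subseteq> K" "finite F" "K \<subseteq> \<Union> (U ` F)"
      using compactE_image[OF K(1), of K U] U by metis
    have meas: "U x \<in> sets M" if "x \<in> K" for x using U[OF that] sets by auto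
    have "emeasure M K \<le> emeasure M (\<Union> (U ` F))"
      by (rule emeasure_mono[OF F(3)]) (use F meas in auto)
    also have "\<dots> \<le> (\<Sum>x\<in>F. emeasure M (U x))"
      by (rule emeasure_subadditive_finite) (use F meas in auto)
    also have "\<dots> = 0" using F U by (auto intro!: sum.neutral)
    finally show ?thesis by simp
  qed
  then have "(SUP K \<in> {K. compact K \<and> K \<subseteq> - A}. emeasure M K) \<le> 0"
    by (intro SUP_least) auto
  then show ?thesis using inner by simp
qed

lemma Cc_integrable:
  fixes M :: "'g::t2_space measure"
  assumes "radon_measure M" "h \<in> Cc"
  shows "integrable M h"
proof -
  have sets: "sets M = sets borel" using assms(1) unfolding radon_measure_def by auto
  have cont: "continuous_on UNIV h" and K: "compact (closure {x. h x \<noteq> 0})"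
    using assms(2) unfolding Cc_def by auto
  define K where "K = closure {x. h x \<noteq> 0}"
  have Kc: "compact K" using K K_def by simp
  have fin: "emeasure M K < \<infinity>" using assms(1) Kc unfolding radon_measure_def by auto
  have Km: "K \<in> sets M" using sets borel_closed[OF compact_imp_closed[OF Kc]] by simp
  have "bounded (h ` K)"
    using compact_imp_bounded[OF compact_continuous_image[OF continuous_on_subset[OF cont] Kc]] by simp
  then obtain B where B0: "\<forall>y\<in>h ` K. norm y \<le> B" unfolding bounded_iff by blast
  have B: "\<And>x. x \<in> K \<Longrightarrow> norm (h x) \<le> B" using B0 by blast
  have hm: "h \<in> borel_measurable M"
    unfolding measurable_cong_sets[OF sets refl] by (rule borel_measurable_continuous_onI[OF cont])
  have "(\<integral>\<^sup>+ x. ennreal (norm (h x)) \<partial>M) \<le> (\<integral>\<^sup>+ x. ennreal B * indicator K x \<partial>M)"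
  proof (rule nn_integral_mono)
    fix x show "ennreal (norm (h x)) \<le> ennreal B * indicator K x"
    proof (cases "x \<in> K")
      case True then show ?thesis using B[OF True] by (simp add: ennreal_leI)
    next
      case False then have "h x = 0" using closure_subset[of "{x. h x \<noteq> 0}"] unfolding K_def by auto
      then show ?thesis by simp
    qed
  qed
  also have "\<dots> = ennreal B * emeasure M K" by (rule nn_integral_cmult_indicator[OF Km])
  also have "\<dots> < \<infinity>" using fin by (simp add: ennreal_mult_less_top)
  finally show ?thesis by (rule integrableI_bounded[OF hm])
qed


lemma set_nn_eq_integral:
  fixes M :: "'g::t2_space measure"
  assumes rad: "radon_measure M" and sup: "measure_support M = A" and cl: "closed A"
    and h: "h \<in> Cc" and pos: "\<And>y. 0 \<le> h y"
  shows "(\<integral>\<^sup>+ y \<in> A. ennreal (h y) \<partial>M) = ennreal (integral\<^sup>L M h)"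
proof -
  have sets: "sets M = sets borel" using rad unfolding radon_measure_def by auto
  have "- A \<in> sets M" using sets cl by (simp add: borel_open open_Compl)
  then have "- A \<in> null_sets M" using null_outside[OF rad sup cl] by (simp add: null_setsI)
  then have ae: "AE y in M. y \<in> A" by (rule AE_I') auto
  have "(\<integral>\<^sup>+ y \<in> A. ennreal (h y) \<partial>M) = (\<integral>\<^sup>+ y. ennreal (h y) \<partial>M)"
    by (rule nn_integral_cong_AE) (use ae in auto)
  also have "\<dots> = ennreal (integral\<^sup>L M h)"
    by (rule nn_integral_eq_integral[OF Cc_integrable[OF rad h]]) (use pos in auto)
  finally show ?thesis .
qed

lemma Cc_comp:
  assumes phi: "N_function \<Phi>" and f: "f \<in> Cc" and k: "k > 0"
  shows "(\<lambda>y. \<Phi> (\<bar>f y\<bar> / k)) \<in> Cc"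
proof -
  have pc: "continuous_on UNIV \<Phi>" and z: "\<And>x. \<Phi> x = 0 \<longleftrightarrow> x = 0"
    using phi unfolding N_function_def by auto
  have fc: "continuous_on UNIV f" and fk: "compact (closure {x. f x \<noteq> 0})" using f unfolding Cc_def by auto
  have c1: "continuous_on UNIV (\<lambda>y. \<bar>f y\<bar> / k)" using k by (intro continuous_intros fc) auto
  have "continuous_on UNIV (\<lambda>y. \<Phi> (\<bar>f y\<bar> / k))"
    by (rule continuous_on_compose2[OF pc c1]) auto
  moreover have "{y. \<Phi> (\<bar>f y\<bar> / k) \<noteq> 0} = {x. f x \<noteq> 0}" using z k by auto
  ultimately show ?thesis using fk unfolding Cc_def by simp
qed

lemma J_scale:
  fixes M :: "'g::t2_space measure"
  assumes rad: "radon_measure M" and phi: "N_function \<Phi>" and f: "f \<in> Cc"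
    and k': "0 < k'" and kk: "k' \<le> k"
  shows "integral\<^sup>L M (\<lambda>y. \<Phi> (\<bar>f y\<bar> / k)) \<le> (k' / k) * integral\<^sup>L M (\<lambda>y. \<Phi> (\<bar>f y\<bar> / k'))"
proof -
  have k: "k > 0" using k' kk by simp
  have i1: "integrable M (\<lambda>y. \<Phi> (\<bar>f y\<bar> / k))" by (rule Cc_integrable[OF rad Cc_comp[OF phi f k]])
  have i2: "integrable M (\<lambda>y. \<Phi> (\<bar>f y\<bar> / k'))" by (rule Cc_integrable[OF rad Cc_comp[OF phi f k']])
  have pw: "\<Phi> (\<bar>f y\<bar> / k) \<le> (k' / k) * \<Phi> (\<bar>f y\<bar> / k')" for y
  proof -
    have "\<bar>f y\<bar> / k = (k' / k) * (\<bar>f y\<bar> / k')" using k' by simp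
    moreover have "\<Phi> ((k' / k) * (\<bar>f y\<bar> / k')) \<le> (k' / k) * \<Phi> (\<bar>f y\<bar> / k')"
      by (rule phi_scale[OF phi]) (use k' kk in auto)
    ultimately show ?thesis by simp
  qed
  have "integral\<^sup>L M (\<lambda>y. \<Phi> (\<bar>f y\<bar> / k)) \<le> integral\<^sup>L M (\<lambda>y. (k' / k) * \<Phi> (\<bar>f y\<bar> / k'))"
    by (rule integral_mono[OF i1 integrable_mult_right[OF i2]]) (rule pw)
  also have "\<dots> = (k' / k) * integral\<^sup>L M (\<lambda>y. \<Phi> (\<bar>f y\<bar> / k'))"
    by (rule integral_mult_right_zero)
  finally show ?thesis .
qed

lemma gauge_props:
  fixes J :: "real \<Rightarrow> real"
  assumes nonneg: "\<And>k. k > 0 \<Longrightarrow> J k \<ge> 0"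
    and scale: "\<And>k' k. 0 < k' \<Longrightarrow> k' \<le> k \<Longrightarrow> J k \<le> (k' / k) * J k'"
  defines "S \<equiv> {k. k > 0 \<and> J k \<le> 1}"
  shows "S \<noteq> {}" "bdd_below S" "Inf S \<ge> 0"
    "\<And>k. k > 0 \<Longrightarrow> Inf S < k \<Longrightarrow> J k < 1"
    "\<And>k. k > 0 \<Longrightarrow> J k > 1 \<Longrightarrow> k \<le> Inf S"
    "\<And>k. k > 0 \<Longrightarrow> J k \<le> 1 \<Longrightarrow> Inf S \<le> k"
proof -
  define k0 where "k0 = max 1 (J 1)"
  have k0: "k0 > 0" "1 \<le> k0" unfolding k0_def by auto
  have "J k0 \<le> (1 / k0) * J 1" by (rule scale) (use k0 in auto)
  also have "\<dots> \<le> 1" using k0 nonneg[of 1] by (auto simp: k0_def field_simps)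
  finally have "k0 \<in> S" unfolding S_def using k0 by auto
  then show ne: "S \<noteq> {}" by auto
  show bb: "bdd_below S" unfolding S_def by (rule bdd_belowI[of _ 0]) auto
  show "Inf S \<ge> 0" by (rule cInf_greatest[OF ne]) (auto simp: S_def)
  show "J k < 1" if kp: "k > 0" and lt: "Inf S < k" for k
  proof -
    obtain k' where k': "k' \<in> S" "k' < k" using cInf_lessD[OF ne lt] by blast
    have "J k \<le> (k' / k) * J k'" by (rule scale) (use k' in \<open>auto simp: S_def\<close>)
    also have "\<dots> \<le> k' / k" proof -
      have "k' / k > 0" using k' kp by (auto simp: S_def)
      moreover have "J k' \<le> 1" using k' by (auto simp: S_def)
      ultimately show ?thesis using mult_left_mono[of "J k'" 1 "k' / k"] by simp
    qed
    also have "\<dots> < 1" using k' kp by simp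
    finally show ?thesis .
  qed
  show "k \<le> Inf S" if "k > 0" "J k > 1" for k
  proof (rule cInf_greatest[OF ne])
    fix k'' assume k'': "k'' \<in> S"
    show "k \<le> k''"
    proof (rule ccontr)
      assume "\<not> k \<le> k''"
      then have "k'' \<le> k" by simp
      have "J k \<le> (k'' / k) * J k''" by (rule scale) (use k'' \<open>k'' \<le> k\<close> in \<open>auto simp: S_def\<close>)
      also have "\<dots> \<le> 1"
        proof -
        have "k'' / k \<le> 1" "k'' / k \<ge> 0" using k'' \<open>k'' \<le> k\<close> by (auto simp: S_def)
        moreover have "J k'' \<le> 1" "J k'' \<ge> 0" using k'' nonneg by (auto simp: S_def)
        ultimately show ?thesis by (intro mult_le_one)
      qed
      finally show False using that(2) by simp
    qed
  qed
  show "Inf S \<le> k" if "k > 0" "J k \<le> 1" for k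
    by (rule cInf_lower[OF _ bb]) (use that in \<open>auto simp: S_def\<close>)
qed



theorem theorem3p1:
  fixes G2 :: "('g::{t2_space, second_countable_topology} \<times> 'g) set"
    and gmul :: "'g \<Rightarrow> 'g \<Rightarrow> 'g" and ginv :: "'g \<Rightarrow> 'g"
    and lam :: "'g \<Rightarrow> 'g measure"
    and \<Phi> \<Psi> :: "real \<Rightarrow> real" and f :: "'g \<Rightarrow> real"
  assumes "locally_compact_space (euclidean :: 'g topology)"
    and "topological_groupoid G2 gmul ginv"
    and "left_haar_system gmul ginv lam"
    and "complementary_pair \<Phi> \<Psi>"
    and "Delta2 TYPE('g) \<Phi>"
    and "f \<in> Cc"
  defines "g \<equiv> (\<lambda>u. gauge_norm \<Phi> (lam u) {x. range_map gmul ginv x = u} f)"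
  shows "continuous_on (unit_space gmul ginv) g \<and>
         compact (closure {u \<in> unit_space gmul ginv. g u \<noteq> 0})"
proof -
  note fC = assms(6)
  define r where "r = range_map gmul ginv"
  define U0 where "U0 = unit_space gmul ginv"
  have phi: "N_function \<Phi>" using assms(4) unfolding complementary_pair_def by auto
  have grp: "groupoid G2 gmul ginv" and mc: "continuous_on G2 (\<lambda>(x, y). gmul x y)"
    and ic: "continuous_on UNIV ginv"
    using assms(2) unfolding topological_groupoid_def by auto
  have inG2: "(x, ginv x) \<in> G2" for x
    using grp unfolding groupoid_def by (metis)
  have pc: "continuous_on UNIV (\<lambda>x. (x, ginv x))" by (intro continuous_intros ic)
  have rc: "continuous_on UNIV r"
  proof -
    have "continuous_on UNIV (\<lambda>x. (\<lambda>(x, y). gmul x y) (x, ginv x))"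
      by (rule continuous_on_compose2[OF mc pc]) (use inG2 in auto)
    then show ?thesis unfolding r_def range_map_def by simp
  qed
  have haar: "\<And>u. u \<in> U0 \<Longrightarrow> radon_measure (lam u) \<and> measure_support (lam u) = {x. r x = u}"
    and haarc: "\<And>h. h \<in> Cc \<Longrightarrow> continuous_on U0 (\<lambda>u. integral\<^sup>L (lam u) h)"
    using assms(3) unfolding left_haar_system_def U0_def r_def by auto
  have clA: "closed {x. r x = u}" for u
    using continuous_closed_preimage_constant[OF rc closed_UNIV, of u] by simp
  define J where "J u k = integral\<^sup>L (lam u) (\<lambda>y. \<Phi> (\<bar>f y\<bar> / k))" for u k
  have Jnn: "J u k \<ge> 0" if "k > 0" for u k
    unfolding J_def using phi unfolding N_function_def by (auto intro!: integral_nonneg_AE)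
  have Jsc: "J u k \<le> (k' / k) * J u k'" if "u \<in> U0" "0 < k'" "k' \<le> k" for u k k'
    unfolding J_def by (rule J_scale) (use haar[OF that(1)] phi fC that in auto)
  have gJ: "g u = Inf {k. k > 0 \<and> J u k \<le> 1}" if u: "u \<in> U0" for u
  proof -
    have "(\<integral>\<^sup>+ y \<in> {x. r x = u}. ennreal (\<Phi> (\<bar>f y\<bar> / k)) \<partial>lam u) = ennreal (J u k)" if "k > 0" for k
      unfolding J_def
      by (rule set_nn_eq_integral[OF _ _ clA Cc_comp[OF phi fC that]])
        (use haar[OF u] phi in \<open>auto simp: N_function_def\<close>)
    then have "{k. k > 0 \<and> (\<integral>\<^sup>+ y \<in> {x. r x = u}. ennreal (\<Phi> (\<bar>f y\<bar> / k)) \<partial>lam u) \<le> 1}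
        = {k. k > 0 \<and> J u k \<le> 1}" by (auto simp: ennreal_le_1)
    then show ?thesis unfolding g_def gauge_norm_def r_def[symmetric] by simp
  qed
  have Jc: "continuous_on U0 (\<lambda>u. J u k)" if "k > 0" for k
    unfolding J_def by (rule haarc[OF Cc_comp[OF phi fC that]])
  have GP3: "0 \<le> Inf {k. k > 0 \<and> J u k \<le> 1}" if "u \<in> U0" for u
    using gauge_props(3)[of "J u", OF Jnn Jsc[OF that]] by simp
  have GP4: "J u k < 1" if "u \<in> U0" "k > 0" "Inf {k. k > 0 \<and> J u k \<le> 1} < k" for u k
    using gauge_props(4)[of "J u", OF Jnn Jsc[OF that(1)]] that(2,3) by simp
  have GP5: "k \<le> Inf {k. k > 0 \<and> J u k \<le> 1}" if "u \<in> U0" "k > 0" "J u k > 1" for u k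
    using gauge_props(5)[of "J u", OF Jnn Jsc[OF that(1)]] that(2,3) by simp
  have GP6: "Inf {k. k > 0 \<and> J u k \<le> 1} \<le> k" if "u \<in> U0" "k > 0" "J u k \<le> 1" for u k
    using gauge_props(6)[of "J u", OF Jnn Jsc[OF that(1)]] that(2,3) by simp
  have cont: "continuous_on U0 g"
    unfolding continuous_on_def
  proof (intro ballI order_tendstoI)
    fix u a assume u: "u \<in> U0"
    have ev0: "eventually (\<lambda>v. v \<in> U0) (at u within U0)"
      unfolding eventually_at_filter by simp
    show "eventually (\<lambda>v. a < g v) (at u within U0)" if "a < g u"
    proof (cases "a < 0")
      case True
      show ?thesis using ev0 by eventually_elim (use True GP3 gJ in force)
    next
      case False
      define k where "k = (a + g u) / 2"
      have k: "k > 0" "k < g u" "a < k" using False that unfolding k_def by auto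
      have "J u k > 1"
        proof (rule ccontr)
        assume "\<not> 1 < J u k"
        then have "J u k \<le> 1" by simp
        then show False using GP6[OF u k(1)] k(2) gJ[OF u] by simp
      qed
      then have "eventually (\<lambda>v. J v k > 1) (at u within U0)"
        using order_tendstoD(1) Jc[OF k(1)] u unfolding continuous_on_def by blast
      then show ?thesis using ev0 by eventually_elim (use GP5 gJ k in force)
    qed
    show "eventually (\<lambda>v. g v < a) (at u within U0)" if "g u < a"
    proof -
      define k where "k = (a + g u) / 2"
      have "g u \<ge> 0" using GP3[OF u] gJ[OF u] by simp
      then have k: "k > 0" "g u < k" "k < a" using that unfolding k_def by auto
      have "J u k < 1"
        using GP4[OF u k(1)] k(2) gJ[OF u] by force
      then have "eventually (\<lambda>v. J v k < 1) (at u within U0)"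
        using order_tendstoD(2) Jc[OF k(1)] u unfolding continuous_on_def by blast
      then show ?thesis using ev0 by eventually_elim (use GP6 gJ k in \<open>force intro: less_imp_le\<close>)
    qed
  qed
  define C where "C = r ` closure {x. f x \<noteq> 0}"
  have Cc: "compact C" unfolding C_def
    by (rule compact_continuous_image[OF continuous_on_subset[OF rc]]) (use fC in \<open>auto simp: Cc_def\<close>)
  have sub: "{u \<in> U0. g u \<noteq> 0} \<subseteq> C"
  proof
    fix u assume "u \<in> {u \<in> U0. g u \<noteq> 0}"
    then have u: "u \<in> U0" "g u \<noteq> 0" by auto
    show "u \<in> C"
    proof (rule ccontr)
      assume "u \<notin> C"
      then have z: "f x = 0" if "r x = u" for x
        using that closure_subset[of "{x. f x \<noteq> 0}"] unfolding C_def by auto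
      have "(\<integral>\<^sup>+ y \<in> {x. r x = u}. ennreal (\<Phi> (\<bar>f y\<bar> / k)) \<partial>lam u) = 0" for k
      proof -
        have "(\<integral>\<^sup>+ y \<in> {x. r x = u}. ennreal (\<Phi> (\<bar>f y\<bar> / k)) \<partial>lam u) = (\<integral>\<^sup>+ y. 0 \<partial>lam u)"
          by (rule nn_integral_cong) (use z phi in \<open>auto simp: N_function_def indicator_def\<close>)
        then show ?thesis by simp
      qed
      then have "g u = Inf {0<..}" unfolding g_def gauge_norm_def r_def[symmetric]
        by (simp add: greaterThan_def)
      then show False using u(2) by simp
    qed
  qed
  have "closure {u \<in> U0. g u \<noteq> 0} \<subseteq> C"
    by (rule closure_minimal[OF sub compact_imp_closed[OF Cc]])
  then have "closure {u \<in> U0. g u \<noteq> 0} = C \<inter> closure {u \<in> U0. g u \<noteq> 0}" by blast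
  then have "compact (closure {u \<in> U0. g u \<noteq> 0})"
    using compact_Int_closed[OF Cc closed_closure[of "{u \<in> U0. g u \<noteq> 0}"]] by simp
  then show ?thesis using cont unfolding U0_def by simp
qed

end
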